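(* Let $R=K[X_1,\dots,X_d]$ be a polynomial ring over a field $K$, $I$ a monomial ideal of $R$ and $J$ any ideal of $R$. Then $I:_RJ^\infty$ is a monomial ideal of $R$.
   Context: $I:_RJ^\infty=\bigcup_k(I:_RJ^k)$. *)

theory Defs
  imports Main "HOL-Library.Poly_Mapping"
begin

definition is_ideal :: "'a::comm_ring_1 set \<Rightarrow> bool" where
  "is_ideal I \<longleftrightarrow> 0 \<in> I \<and> (\<forall>a\<in>I. \<forall>b\<in>I. a + b \<in> I) \<and> (\<forall>r. \<forall>a\<in>I. r * a \<in> I)"

definition ideal_gen :: "'a::comm_ring_1 set \<Rightarrow> 'a set" where
  "ideal_gen S = \<Inter>{I. is_ideal I \<and> S \<subseteq> I}"

definition ideal_prod :: "'a::comm_ring_1 set \<Rightarrow> 'a set \<Rightarrow> 'a set" where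
  "ideal_prod A B = ideal_gen {a * b |a b. a \<in> A \<and> b \<in> B}"

primrec ideal_pow :: "'a::comm_ring_1 set \<Rightarrow> nat \<Rightarrow> 'a set" where
  "ideal_pow J 0 = UNIV"
| "ideal_pow J (Suc k) = ideal_prod (ideal_pow J k) J"

definition ideal_colon :: "'a::comm_ring_1 set \<Rightarrow> 'a set \<Rightarrow> 'a set" where
  "ideal_colon I J = {f. \<forall>g\<in>J. f * g \<in> I}"

definition ideal_saturation :: "'a::comm_ring_1 set \<Rightarrow> 'a set \<Rightarrow> 'a set" where
  "ideal_saturation I J = (\<Union>k. ideal_colon I (ideal_pow J k))"

text \<open>Polynomial ring K[X_v : v in 'v] as finitely supported maps from
  exponent vectors to coefficients; with 'v finite of cardinality d this is K[X_1..X_d].\<close>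
type_synonym ('v, 'a) mpoly = "('v \<Rightarrow>\<^sub>0 nat) \<Rightarrow>\<^sub>0 'a"

definition monomial_poly :: "('v \<Rightarrow>\<^sub>0 nat) \<Rightarrow> ('v, 'a::comm_ring_1) mpoly" where
  "monomial_poly m = Poly_Mapping.single m 1"

definition monomial_ideal :: "('v, 'a::comm_ring_1) mpoly set \<Rightarrow> bool" where
  "monomial_ideal I \<longleftrightarrow> (\<exists>M. I = ideal_gen (monomial_poly ` M))"

end

theory Submission
  imports Defs "HOL-Library.Countable"
begin


abbreviation lookup where "lookup \<equiv> Poly_Mapping.lookup"
abbreviation keys where "keys \<equiv> Poly_Mapping.keys"

lemma ideal_gen_ideal: "is_ideal (ideal_gen S)"
  unfolding ideal_gen_def is_ideal_def by auto

lemma ideal_gen_sub: "S \<subseteq> ideal_gen S"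
  unfolding ideal_gen_def by auto

lemma ideal_gen_least: "is_ideal A \<Longrightarrow> S \<subseteq> A \<Longrightarrow> ideal_gen S \<subseteq> A"
  unfolding ideal_gen_def by auto

lemma ideal_UNIV: "is_ideal UNIV"
  unfolding is_ideal_def by auto

lemma ideal_pow_ideal: "is_ideal (ideal_pow J k)"
  by (cases k) (auto simp: ideal_UNIV ideal_prod_def ideal_gen_ideal)

lemma ideal_prod_sub: assumes A: "is_ideal A" shows "ideal_prod A B \<subseteq> A"
  unfolding ideal_prod_def
proof (rule ideal_gen_least[OF A], clarify)
  fix a b assume "a \<in> A" "b \<in> B"
  then show "a * b \<in> A" using A unfolding is_ideal_def by (metis mult.commute)
qed

lemma ideal_pow_anti: "k \<le> k' \<Longrightarrow> ideal_pow J k' \<subseteq> ideal_pow J k"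
proof (induction k' rule: dec_induct)
  case base
  then show ?case by simp
next
  case (step n)
  then show ?case using ideal_prod_sub[OF ideal_pow_ideal, of J n J] by auto
qed

lemma ideal_add: "is_ideal A \<Longrightarrow> a \<in> A \<Longrightarrow> b \<in> A \<Longrightarrow> a + b \<in> A"
  unfolding is_ideal_def by auto
lemma ideal_mult: "is_ideal A \<Longrightarrow> a \<in> A \<Longrightarrow> r * a \<in> A"
  unfolding is_ideal_def by auto
lemma ideal_zero: "is_ideal A \<Longrightarrow> 0 \<in> A"
  unfolding is_ideal_def by auto

lemma colon_ideal: "is_ideal I \<Longrightarrow> is_ideal (ideal_colon I A)"
  unfolding is_ideal_def ideal_colon_def by (auto simp: distrib_right mult.assoc)

lemma colon_mono: "k \<le> k' \<Longrightarrow> ideal_colon I (ideal_pow J k) \<subseteq> ideal_colon I (ideal_pow J k')"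
  unfolding ideal_colon_def using ideal_pow_anti[of k k' J] by auto

lemma sat_ideal: assumes "is_ideal I" shows "is_ideal (ideal_saturation I J)"
  unfolding is_ideal_def
proof (intro conjI ballI allI)
  show "0 \<in> ideal_saturation I J"
    unfolding ideal_saturation_def using ideal_zero[OF colon_ideal[OF assms]] by blast
next
  fix a b assume "a \<in> ideal_saturation I J" "b \<in> ideal_saturation I J"
  then obtain k1 k2 where "a \<in> ideal_colon I (ideal_pow J k1)" "b \<in> ideal_colon I (ideal_pow J k2)"
    unfolding ideal_saturation_def by auto
  then have "a \<in> ideal_colon I (ideal_pow J (max k1 k2))" "b \<in> ideal_colon I (ideal_pow J (max k1 k2))"
    using colon_mono[of k1 "max k1 k2" I J] colon_mono[of k2 "max k1 k2" I J] by auto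
  then show "a + b \<in> ideal_saturation I J"
    unfolding ideal_saturation_def using ideal_add[OF colon_ideal[OF assms]] by blast
next
  fix r a assume "a \<in> ideal_saturation I J"
  then show "r * a \<in> ideal_saturation I J"
    unfolding ideal_saturation_def using ideal_mult[OF colon_ideal[OF assms]] by blast
qed

lemma pow_mem: "g \<in> J \<Longrightarrow> g ^ k \<in> ideal_pow J k"
proof (induction k)
  case 0 then show ?case by simp
next
  case (Suc k)
  then have "g ^ k * g \<in> {a * b |a b. a \<in> ideal_pow J k \<and> b \<in> J}" by blast
  then have "g ^ k * g \<in> ideal_prod (ideal_pow J k) J" unfolding ideal_prod_def
    by (rule subsetD[OF ideal_gen_sub])
  then show ?case by (simp only: ideal_pow.simps power_Suc2)
qed

lemma ideal_sum:
  assumes A: "is_ideal A" and fin: "finite X" and h: "\<And>x. x \<in> X \<Longrightarrow> h x \<in> A"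
  shows "sum h X \<in> A"
  using fin h
proof (induction X rule: finite_induct)
  case empty then show ?case by (simp add: ideal_zero[OF A])
next
  case (insert x F) then show ?case by (simp add: ideal_add[OF A])
qed

definition le_pm :: "('v \<Rightarrow>\<^sub>0 nat) \<Rightarrow> ('v \<Rightarrow>\<^sub>0 nat) \<Rightarrow> bool" where
  "le_pm a b \<longleftrightarrow> (\<forall>v. lookup a v \<le> lookup b v)"

lemma le_pm_trans: "le_pm a b \<Longrightarrow> le_pm b c \<Longrightarrow> le_pm a c"
  unfolding le_pm_def using order_trans by blast

lemma le_pm_add: "le_pm b (a + b)" "le_pm a (a + b)"
  by (auto simp: le_pm_def lookup_add)

lemma poly_sum_rep: "f = (\<Sum>c\<in>keys f. Poly_Mapping.single c (lookup f c))"
proof (rule poly_mapping_eqI)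
  fix k
  show "lookup f k = lookup (\<Sum>c\<in>keys f. Poly_Mapping.single c (lookup f c)) k"
    unfolding lookup_sum lookup_single
    by (cases "k \<in> keys f") (auto simp: when_def in_keys_iff)
qed

lemma mem_from_keys:
  fixes f :: "('v, 'a::comm_ring_1) mpoly"
  assumes A: "is_ideal A" and h: "\<And>c. c \<in> keys f \<Longrightarrow> monomial_poly c \<in> A"
  shows "f \<in> A"
proof -
  have "Poly_Mapping.single c (lookup f c) \<in> A" if "c \<in> keys f" for c
  proof -
    have "Poly_Mapping.single c (lookup f c) = Poly_Mapping.single 0 (lookup f c) * monomial_poly c"
      by (simp add: monomial_poly_def mult_single)
    then show ?thesis using ideal_mult[OF A h[OF that]] by simp
  qed
  then have "(\<Sum>c\<in>keys f. Poly_Mapping.single c (lookup f c)) \<in> A"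
    by (intro ideal_sum[OF A]) auto
  then show ?thesis using poly_sum_rep[of f] by simp
qed

lemma keys_ideal:
  assumes Q: "\<And>d d'. Q d \<Longrightarrow> le_pm d d' \<Longrightarrow> Q d'"
  shows "is_ideal {g :: ('v, 'a::comm_ring_1) mpoly. \<forall>d\<in>keys g. Q d}"
  unfolding is_ideal_def
proof (intro conjI ballI allI)
  show "0 \<in> {g :: ('v, 'a) mpoly. \<forall>d\<in>keys g. Q d}" by simp
next
  fix a b :: "('v, 'a) mpoly"
  assume "a \<in> {g. \<forall>d\<in>keys g. Q d}" "b \<in> {g. \<forall>d\<in>keys g. Q d}"
  then show "a + b \<in> {g. \<forall>d\<in>keys g. Q d}" using keys_add[of a b] by auto
next
  fix r a :: "('v, 'a) mpoly"
  assume a: "a \<in> {g. \<forall>d\<in>keys g. Q d}"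
  show "r * a \<in> {g. \<forall>d\<in>keys g. Q d}"
  proof (clarify)
    fix d assume "d \<in> keys (r * a)"
    then obtain x y where "d = x + y" "y \<in> keys a" using keys_mult[of r a] by auto
    then show "Q d" using a Q le_pm_add(1)[of y x] by auto
  qed
qed

lemma monomial_ideal_iff:
  fixes f :: "('v, 'a::field) mpoly"
  shows "f \<in> ideal_gen (monomial_poly ` M) \<longleftrightarrow> (\<forall>c\<in>keys f. \<exists>\<mu>\<in>M. le_pm \<mu> c)"
proof
  assume "f \<in> ideal_gen (monomial_poly ` M)"
  moreover have "ideal_gen (monomial_poly ` M) \<subseteq> {g :: ('v, 'a) mpoly. \<forall>d\<in>keys g. \<exists>\<mu>\<in>M. le_pm \<mu> d}"
  proof (rule ideal_gen_least)
    show "is_ideal {g :: ('v, 'a) mpoly. \<forall>d\<in>keys g. \<exists>\<mu>\<in>M. le_pm \<mu> d}"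
      by (rule keys_ideal) (use le_pm_trans in blast)
    show "monomial_poly ` M \<subseteq> {g :: ('v, 'a) mpoly. \<forall>d\<in>keys g. \<exists>\<mu>\<in>M. le_pm \<mu> d}"
      by (auto simp: monomial_poly_def le_pm_def)
  qed
  ultimately show "\<forall>c\<in>keys f. \<exists>\<mu>\<in>M. le_pm \<mu> c" by auto
next
  assume h: "\<forall>c\<in>keys f. \<exists>\<mu>\<in>M. le_pm \<mu> c"
  show "f \<in> ideal_gen (monomial_poly ` M)"
  proof (rule mem_from_keys[OF ideal_gen_ideal])
    fix c assume "c \<in> keys f"
    then obtain \<mu> where mu: "\<mu> \<in> M" "le_pm \<mu> c" using h by auto
    have "(c - \<mu>) + \<mu> = c"
      using mu(2) by (intro poly_mapping_eqI) (auto simp: lookup_add lookup_minus le_pm_def)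
    then have eq: "monomial_poly c = (monomial_poly (c - \<mu>) :: ('v, 'a) mpoly) * monomial_poly \<mu>"
      by (simp add: monomial_poly_def mult_single)
    have m: "(monomial_poly \<mu> :: ('v, 'a) mpoly) \<in> ideal_gen (monomial_poly ` M)"
      using mu(1) ideal_gen_sub by blast
    show "(monomial_poly c :: ('v, 'a) mpoly) \<in> ideal_gen (monomial_poly ` M)"
      using ideal_mult[OF ideal_gen_ideal m, of "monomial_poly (c - \<mu>)"] unfolding eq .
  qed
qed



definition embv :: "('v::finite \<Rightarrow>\<^sub>0 nat) \<Rightarrow> (nat \<Rightarrow>\<^sub>0 nat)" where
  "embv c = Abs_poly_mapping (\<lambda>n. if n \<in> range (to_nat :: 'v \<Rightarrow> nat) then lookup c (inv to_nat n) else 0)"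

lemma lookup_emb:
  fixes c :: "'v::finite \<Rightarrow>\<^sub>0 nat"
  shows "lookup (embv c) n = (if n \<in> range (to_nat :: 'v \<Rightarrow> nat) then lookup c (inv to_nat n) else 0)"
proof -
  have "{n. (if n \<in> range (to_nat :: 'v \<Rightarrow> nat) then lookup c (inv to_nat n) else 0) \<noteq> 0} \<subseteq> range (to_nat :: 'v \<Rightarrow> nat)"
    by auto
  then have "finite {n. (if n \<in> range (to_nat :: 'v \<Rightarrow> nat) then lookup c (inv to_nat n) else 0) \<noteq> 0}"
    by (rule finite_subset) simp
  then show ?thesis unfolding embv_def by simp
qed

lemma embv_add: "embv (a + b) = embv a + embv b"
  by (rule poly_mapping_eqI) (simp add: lookup_emb lookup_add)

lemma embv_inj: fixes a b :: "'v::finite \<Rightarrow>\<^sub>0 nat" assumes "embv a = embv b" shows "a = b"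
proof (rule poly_mapping_eqI)
  fix v :: 'v
  have "lookup (embv a) (to_nat v) = lookup (embv b) (to_nat v)" using assms by simp
  then show "lookup a v = lookup b v" by (simp add: lookup_emb)
qed

lemma mpoly_mult_nz:
  fixes f g :: "('v::finite, 'a::field) mpoly"
  assumes f: "f \<noteq> 0" and g: "g \<noteq> 0"
  shows "f * g \<noteq> 0"
proof -
  have A: "finite (keys f)" "keys f \<noteq> {}" using f by auto
  have B: "finite (keys g)" "keys g \<noteq> {}" using g by auto
  have "Max (embv ` keys f) \<in> embv ` keys f" using A by (intro Max_in) auto
  then obtain a0 where a0: "a0 \<in> keys f" "embv a0 = Max (embv ` keys f)" by auto
  have "Max (embv ` keys g) \<in> embv ` keys g" using B by (intro Max_in) auto
  then obtain b0 where b0: "b0 \<in> keys g" "embv b0 = Max (embv ` keys g)" by auto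
  have amax: "embv a \<le> embv a0" if "a \<in> keys f" for a using a0 A that by simp
  have bmax: "embv b \<le> embv b0" if "b \<in> keys g" for b using b0 B that by simp
  have uniq: "a = a0" if "a \<in> keys f" "b \<in> keys g" "a + b = a0 + b0" for a b
  proof -
    have e: "embv a + embv b = embv a0 + embv b0" using that(3) by (metis embv_add)
    have "embv a = embv a0"
    proof (rule ccontr)
      assume "embv a \<noteq> embv a0"
      then have "embv a < embv a0" using amax[OF that(1)] by simp
      then have "embv a + embv b < embv a0 + embv b0" using bmax[OF that(2)]
        by (rule add_less_le_mono)
      then show False using e by simp
    qed
    then show ?thesis by (rule embv_inj)
  qed
  have trm: "lookup f l * (\<Sum>q. lookup g q when a0 + b0 = l + q) = (lookup f a0 * lookup g b0 when l = a0)" for l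
  proof (cases "l = a0")
    case True
    then show ?thesis by simp
  next
    case False
    show ?thesis
    proof (cases "l \<in> keys f")
      case False2: False
      then show ?thesis using False by (simp add: in_keys_iff)
    next
      case True
      have "(lookup g q when a0 + b0 = l + q) = 0" for q
      proof (cases "q \<in> keys g")
        case True2: True
        then have "a0 + b0 \<noteq> l + q" using uniq[OF True True2] False by metis
        then show ?thesis by simp
      next
        case False
        then show ?thesis by (simp add: in_keys_iff)
      qed
      then show ?thesis using \<open>l \<noteq> a0\<close> by simp
    qed
  qed
  have "lookup (f * g) (a0 + b0) = lookup f a0 * lookup g b0"
    unfolding lookup_mult trm by simp
  moreover have "lookup f a0 \<noteq> 0" "lookup g b0 \<noteq> 0" using a0 b0 by (auto simp: in_keys_iff)
  ultimately show ?thesis by auto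
qed



definition restr :: "('b \<Rightarrow> bool) \<Rightarrow> ('b \<Rightarrow>\<^sub>0 'a::zero) \<Rightarrow> ('b \<Rightarrow>\<^sub>0 'a)" where
  "restr P p = Abs_poly_mapping (\<lambda>x. if P x then lookup p x else 0)"

lemma lookup_restr: "lookup (restr P p) x = (if P x then lookup p x else 0)"
proof -
  have "{x. (if P x then lookup p x else 0) \<noteq> 0} \<subseteq> {x. lookup p x \<noteq> 0}" by auto
  then have "finite {x. (if P x then lookup p x else 0) \<noteq> 0}"
    by (rule finite_subset) simp
  then show ?thesis unfolding restr_def by simp
qed

lemma keys_restr: "keys (restr P p) = {x \<in> keys p. P x}"
  by (auto simp: in_keys_iff lookup_restr split: if_splits)

lemma restr_split: "p = restr P p + restr (\<lambda>x. \<not> P x) (p :: 'b \<Rightarrow>\<^sub>0 'a::comm_monoid_add)"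
  by (rule poly_mapping_eqI) (simp add: lookup_add lookup_restr)

definition tdeg :: "'v set \<Rightarrow> ('v::finite \<Rightarrow>\<^sub>0 nat) \<Rightarrow> nat" where
  "tdeg s a = (\<Sum>v\<in>-s. lookup a v)"

lemma tdeg_add: "tdeg s (a + b) = tdeg s a + tdeg s b"
  by (simp add: tdeg_def lookup_add sum.distrib)

lemma tdeg_zero: "tdeg s a = 0 \<longleftrightarrow> (\<forall>v. v \<notin> s \<longrightarrow> lookup a v = 0)"
  by (auto simp: tdeg_def)

lemma lemmaA1:
  fixes f g :: "('v::finite, 'a::field) mpoly"
    and Gd :: "('v \<Rightarrow>\<^sub>0 nat) \<Rightarrow> bool"
  assumes up: "\<And>a e. Gd a \<Longrightarrow> Gd (a + e)"
    and down: "\<And>a y. Gd (a + y) \<Longrightarrow> (\<forall>v. v \<notin> s \<longrightarrow> lookup y v = 0) \<Longrightarrow> Gd a"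
    and fg: "\<And>x. x \<in> keys (f * g) \<Longrightarrow> Gd x"
    and b: "b \<in> keys g" "\<forall>v. v \<notin> s \<longrightarrow> lookup b v = 0"
  shows "\<forall>a\<in>keys f. Gd a"
proof (rule ccontr)
  assume "\<not> (\<forall>a\<in>keys f. Gd a)"
  define Bad where "Bad = {a \<in> keys f. \<not> Gd a}"
  have BadF: "finite Bad" "Bad \<noteq> {}" using \<open>\<not> (\<forall>a\<in>keys f. Gd a)\<close> by (auto simp: Bad_def)
  define \<delta> where "\<delta> = Min (tdeg s ` Bad)"
  have "\<delta> \<in> tdeg s ` Bad" unfolding \<delta>_def using BadF by (intro Min_in) auto
  then obtain a1 where a1: "a1 \<in> Bad" "tdeg s a1 = \<delta>" by auto
  have dmin: "\<delta> \<le> tdeg s a" if "a \<in> Bad" for a unfolding \<delta>_def using BadF that by simp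
  define P where "P = (\<lambda>a. \<not> Gd a \<and> tdeg s a = \<delta>)"
  define fd where "fd = restr P f"
  define f1 where "f1 = restr (\<lambda>x. \<not> P x) f"
  define Q where "Q = (\<lambda>y. tdeg s y = 0)"
  define g0 where "g0 = restr Q g"
  define g1 where "g1 = restr (\<lambda>x. \<not> Q x) g"
  have fsplit: "f = fd + f1" unfolding fd_def f1_def by (rule restr_split)
  have gsplit: "g = g0 + g1" unfolding g0_def g1_def by (rule restr_split)
  have "a1 \<in> keys fd" using a1 by (auto simp: fd_def keys_restr P_def Bad_def)
  then have fd0: "fd \<noteq> 0" by auto
  have "b \<in> keys g0" using b by (auto simp: g0_def keys_restr Q_def tdeg_zero)
  then have g00: "g0 \<noteq> 0" by auto
  have "fd * g0 \<noteq> 0" using mpoly_mult_nz[OF fd0 g00] .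
  then obtain x where x: "x \<in> keys (fd * g0)" by (metis all_not_in_conv keys_eq_empty)
  then obtain a y where ay: "x = a + y" "a \<in> keys fd" "y \<in> keys g0" using keys_mult[of fd g0] by auto
  have a: "\<not> Gd a" "tdeg s a = \<delta>" "a \<in> keys f" using ay(2) by (auto simp: fd_def keys_restr P_def)
  have y: "tdeg s y = 0" using ay(3) by (auto simp: g0_def keys_restr Q_def)
  have xbad: "\<not> Gd x" using a(1) down[of a y] y ay(1) by (auto simp: tdeg_zero)
  have xdeg: "tdeg s x = \<delta>" using a y ay(1) by (simp add: tdeg_add)
  have l1: "lookup (f1 * g0) x = 0"
  proof (rule ccontr)
    assume "lookup (f1 * g0) x \<noteq> 0"
    then have "x \<in> keys (f1 * g0)" by (simp add: in_keys_iff)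
    then obtain a' y' where ay': "x = a' + y'" "a' \<in> keys f1" "y' \<in> keys g0"
      using keys_mult[of f1 g0] by auto
    have a': "a' \<in> keys f" "\<not> P a'" using ay'(2) by (auto simp: f1_def keys_restr)
    have y': "tdeg s y' = 0" using ay'(3) by (auto simp: g0_def keys_restr Q_def)
    show False
    proof (cases "Gd a'")
      case True
      then show False using up[of a' y'] ay'(1) xbad by simp
    next
      case False
      then have "a' \<in> Bad" "tdeg s a' \<noteq> \<delta>" using a' by (auto simp: Bad_def P_def)
      then have "tdeg s a' > \<delta>" using dmin by force
      then show False using xdeg ay'(1) y' by (simp add: tdeg_add)
    qed
  qed
  have l2: "lookup (f * g1) x = 0"
  proof (rule ccontr)
    assume "lookup (f * g1) x \<noteq> 0"
    then have "x \<in> keys (f * g1)" by (simp add: in_keys_iff)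
    then obtain a' y' where ay': "x = a' + y'" "a' \<in> keys f" "y' \<in> keys g1"
      using keys_mult[of f g1] by auto
    have y': "tdeg s y' \<noteq> 0" using ay'(3) by (auto simp: g1_def keys_restr Q_def)
    show False
    proof (cases "Gd a'")
      case True
      then show False using up[of a' y'] ay'(1) xbad by simp
    next
      case False
      then have "a' \<in> Bad" using ay' by (auto simp: Bad_def)
      then have "tdeg s a' \<ge> \<delta>" using dmin by force
      then show False using xdeg ay'(1) y' by (simp add: tdeg_add)
    qed
  qed
  have "f * g = fd * g0 + f1 * g0 + f * g1"
    by (subst (1 2) fsplit, subst gsplit) (simp add: algebra_simps)
  then have "lookup (f * g) x = lookup (fd * g0) x"
    using l1 l2 by (simp add: lookup_add)
  then have "x \<in> keys (f * g)" using x by (simp add: in_keys_iff)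
  then show False using fg xbad by blast
qed



lemma stepA:
  fixes f :: "('v::finite, 'a::field) mpoly"
  assumes col: "f \<in> ideal_colon (ideal_gen (monomial_poly ` M)) (ideal_pow J k)"
    and g: "g \<in> J" "b \<in> keys g" "keys b \<subseteq> s"
    and c: "c \<in> keys f"
  shows "\<exists>N. \<exists>\<mu>\<in>M. \<forall>v. lookup \<mu> v \<le> lookup c v + (if v \<in> s then N else 0)"
proof -
  define Gd where "Gd = (\<lambda>d :: 'v \<Rightarrow>\<^sub>0 nat. \<exists>N. \<exists>\<mu>\<in>M. \<forall>v. lookup \<mu> v \<le> lookup d v + (if v \<in> s then N else 0))"
  have up: "Gd (a + e)" if "Gd a" for a e
  proof -
    from that obtain N \<mu> where "\<mu> \<in> M" "\<forall>v. lookup \<mu> v \<le> lookup a v + (if v \<in> s then N else 0)"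
      unfolding Gd_def by blast
    moreover have "\<forall>v. lookup \<mu> v \<le> lookup (a + e) v + (if v \<in> s then N else 0)"
    proof
      fix v
      have "lookup \<mu> v \<le> lookup a v + (if v \<in> s then N else 0)" using calculation(2) by blast
      then show "lookup \<mu> v \<le> lookup (a + e) v + (if v \<in> s then N else 0)"
        unfolding lookup_add by linarith
    qed
    ultimately show ?thesis unfolding Gd_def by blast
  qed
  have down: "Gd a" if "Gd (a + y)" "\<forall>v. v \<notin> s \<longrightarrow> lookup y v = 0" for a y
  proof -
    from that obtain N \<mu> where mu: "\<mu> \<in> M" "\<forall>v. lookup \<mu> v \<le> lookup (a + y) v + (if v \<in> s then N else 0)"
      unfolding Gd_def by blast
    define Y where "Y = (\<Sum>v\<in>UNIV. lookup y v)"
    have yY: "lookup y v \<le> Y" for v unfolding Y_def by (rule member_le_sum) auto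
    have "\<forall>v. lookup \<mu> v \<le> lookup a v + (if v \<in> s then N + Y else 0)"
    proof
      fix v
      show "lookup \<mu> v \<le> lookup a v + (if v \<in> s then N + Y else 0)"
        using mu(2)[rule_format, of v] yY[of v] that(2)[rule_format, of v]
        by (cases "v \<in> s") (auto simp: lookup_add)
    qed
    then show ?thesis unfolding Gd_def using mu(1) by blast
  qed
  have gb: "\<forall>v. v \<notin> s \<longrightarrow> lookup b v = 0" using g(3) by (auto simp: in_keys_iff)
  have ind: "\<forall>a\<in>keys h. Gd a" if "h * g ^ n \<in> ideal_gen (monomial_poly ` M)" for h n
    using that
  proof (induction n arbitrary: h)
    case 0
    then have "\<forall>c\<in>keys h. \<exists>\<mu>\<in>M. le_pm \<mu> c" using monomial_ideal_iff[of h M] by simp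
    show ?case
    proof
      fix c assume "c \<in> keys h"
      then obtain \<mu> where "\<mu> \<in> M" "le_pm \<mu> c" using \<open>\<forall>c\<in>keys h. \<exists>\<mu>\<in>M. le_pm \<mu> c\<close> by blast
      then show "Gd c" unfolding Gd_def le_pm_def by (intro exI[of _ 0] bexI[of _ \<mu>]) auto
    qed
  next
    case (Suc n)
    have "(h * g) * g ^ n \<in> ideal_gen (monomial_poly ` M)"
      using Suc.prems by (simp add: power_Suc mult.assoc)
    then have "\<forall>a\<in>keys (h * g). Gd a" by (rule Suc.IH)
    then have A: "\<And>x. x \<in> keys (h * g) \<Longrightarrow> Gd x" by blast
    show ?case by (rule lemmaA1[where Gd=Gd and s=s and b=b, OF up down A g(2) gb])
  qed
  have "f * g ^ k \<in> ideal_gen (monomial_poly ` M)"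
    using col pow_mem[OF g(1), of k] unfolding ideal_colon_def by blast
  then have "\<forall>a\<in>keys f. Gd a" by (rule ind)
  then have "Gd c" using c by blast
  then show ?thesis unfolding Gd_def .
qed

lemma powkeys:
  fixes h :: "('v, 'a::comm_ring_1) mpoly"
  assumes "h \<in> ideal_pow J k" "d \<in> keys h"
  shows "\<exists>\<phi>. (\<forall>i<k. \<exists>g\<in>J. \<phi> i \<in> keys g) \<and> le_pm (\<Sum>i<k. \<phi> i) d"
  using assms
proof (induction k arbitrary: h d)
  case 0
  then show ?case by (auto simp: le_pm_def)
next
  case (Suc k)
  define Q where "Q = (\<lambda>d. \<exists>\<phi>. (\<forall>i<Suc k. \<exists>g\<in>J. \<phi> i \<in> keys g) \<and> le_pm (\<Sum>i<Suc k. \<phi> i) d)"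
  have "ideal_gen {a * b |a b. a \<in> ideal_pow J k \<and> b \<in> J} \<subseteq> {g :: ('v, 'a) mpoly. \<forall>d\<in>keys g. Q d}"
  proof (rule ideal_gen_least)
    show "is_ideal {g :: ('v, 'a) mpoly. \<forall>d\<in>keys g. Q d}"
      by (rule keys_ideal) (auto simp: Q_def intro: le_pm_trans)
    show "{a * b |a b. a \<in> ideal_pow J k \<and> b \<in> J} \<subseteq> {g. \<forall>d\<in>keys g. Q d}"
    proof (clarify)
      fix a b d assume ab: "a \<in> ideal_pow J k" "b \<in> J" "d \<in> keys (a * b)"
      then obtain x y where xy: "d = x + y" "x \<in> keys a" "y \<in> keys b"
        using keys_mult[of a b] by auto
      obtain \<phi> where phi: "\<forall>i<k. \<exists>g\<in>J. \<phi> i \<in> keys g" "le_pm (\<Sum>i<k. \<phi> i) x"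
        using Suc.IH[OF ab(1) xy(2)] by blast
      define \<psi> where "\<psi> = \<phi>(k := y)"
      have "(\<Sum>i<Suc k. \<psi> i) = (\<Sum>i<k. \<phi> i) + y"
        unfolding \<psi>_def by (simp add: sum.lessThan_Suc)
      then have "le_pm (\<Sum>i<Suc k. \<psi> i) d"
        using phi(2) xy(1) by (auto simp: le_pm_def lookup_add)
      moreover have "\<forall>i<Suc k. \<exists>g\<in>J. \<psi> i \<in> keys g"
        using phi(1) ab(2) xy(3) by (auto simp: \<psi>_def less_Suc_eq)
      ultimately show "Q d" unfolding Q_def by blast
    qed
  qed
  then show ?case using Suc.prems unfolding Q_def ideal_pow.simps ideal_prod_def by blast
qed



lemma pigeon:
  fixes \<phi> :: "nat \<Rightarrow> 'v::finite \<Rightarrow>\<^sub>0 nat"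
  assumes N: "N \<ge> 1" and K: "K = card (UNIV :: 'v set set) * N"
  shows "\<exists>i<K. N \<le> card {j\<in>{..<K}. keys (\<phi> j) = keys (\<phi> i)}"
proof (rule ccontr)
  assume "\<not> ?thesis"
  then have lt: "\<And>i. i < K \<Longrightarrow> card {j\<in>{..<K}. keys (\<phi> j) = keys (\<phi> i)} \<le> N - 1" by force
  define img where "img = (\<lambda>i. keys (\<phi> i)) ` {..<K}"
  have "{..<K} = (\<Union>t\<in>img. {j\<in>{..<K}. keys (\<phi> j) = t})" unfolding img_def by auto
  then have "card {..<K} \<le> (\<Sum>t\<in>img. card {j\<in>{..<K}. keys (\<phi> j) = t})"
    by (metis card_UN_le finite_imageI finite_lessThan img_def)
  also have "\<dots> \<le> (\<Sum>t\<in>img. (N - 1))"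
  proof (rule sum_mono)
    fix t assume "t \<in> img"
    then obtain i where "i < K" "t = keys (\<phi> i)" unfolding img_def by auto
    then show "card {j\<in>{..<K}. keys (\<phi> j) = t} \<le> N - 1" using lt by blast
  qed
  also have "\<dots> = card img * (N - 1)" by simp
  also have "\<dots> \<le> card (UNIV :: 'v set set) * (N - 1)"
    by (rule mult_right_mono) (auto intro: card_mono)
  finally have "K \<le> card (UNIV :: 'v set set) * (N - 1)" by simp
  moreover have "card (UNIV :: 'v set set) \<ge> 1"
    by (metis One_nat_def Suc_leI card_gt_0_iff finite_UNIV UNIV_not_empty)
  moreover have "card (UNIV :: 'v set set) * (N - 1) < card (UNIV :: 'v set set) * N"
    using calculation(2) N by simp
  ultimately show False using K by linarith
qed

lemma keylemma:
  fixes f :: "('v::finite, 'a::field) mpoly"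
  assumes col: "f \<in> ideal_colon (ideal_gen (monomial_poly ` M)) (ideal_pow J k)"
    and c: "c \<in> keys f"
  shows "monomial_poly c \<in> ideal_saturation (ideal_gen (monomial_poly ` M)) J"
proof -
  define G where "G = {s. \<exists>g\<in>J. \<exists>b\<in>keys g. keys b \<subseteq> s}"
  have "\<forall>s\<in>G. \<exists>N. \<exists>\<mu>\<in>M. \<forall>v. lookup \<mu> v \<le> lookup c v + (if v \<in> s then N else 0)"
  proof
    fix s assume "s \<in> G"
    then obtain g b where "g \<in> J" "b \<in> keys g" "keys b \<subseteq> s" unfolding G_def by blast
    then show "\<exists>N. \<exists>\<mu>\<in>M. \<forall>v. lookup \<mu> v \<le> lookup c v + (if v \<in> s then N else 0)"
      by (rule stepA[OF col _ _ _ c])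
  qed
  then obtain Nf where Nf: "\<And>s. s \<in> G \<Longrightarrow> \<exists>\<mu>\<in>M. \<forall>v. lookup \<mu> v \<le> lookup c v + (if v \<in> s then Nf s else 0)"
    by metis
  define N where "N = Max (Nf ` G) + 1"
  have finG: "finite G" by simp
  have NfN: "Nf s < N" if "s \<in> G" for s
    unfolding N_def using finG that by (simp add: le_imp_less_Suc)
  have N1: "N \<ge> 1" unfolding N_def by simp
  define K where "K = card (UNIV :: 'v set set) * N"
  have "monomial_poly c \<in> ideal_colon (ideal_gen (monomial_poly ` M)) (ideal_pow J K)"
    unfolding ideal_colon_def
  proof (clarify)
    fix h assume h: "h \<in> ideal_pow J K"
    show "monomial_poly c * h \<in> ideal_gen (monomial_poly ` M)"
      unfolding monomial_ideal_iff
    proof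
      fix x assume "x \<in> keys (monomial_poly c * h)"
      then obtain d where xd: "x = c + d" "d \<in> keys h"
        using keys_mult[of "monomial_poly c" h] by (auto simp: monomial_poly_def)
      obtain \<phi> where phi: "\<forall>i<K. \<exists>g\<in>J. \<phi> i \<in> keys g" "le_pm (\<Sum>i<K. \<phi> i) d"
        using powkeys[OF h xd(2)] by blast
      obtain i where i: "i < K" "N \<le> card {j\<in>{..<K}. keys (\<phi> j) = keys (\<phi> i)}"
        using pigeon[OF N1 K_def, of \<phi>] by blast
      define s where "s = keys (\<phi> i)"
      define Ix where "Ix = {j\<in>{..<K}. keys (\<phi> j) = s}"
      have sG: "s \<in> G" using phi(1) i(1) unfolding G_def s_def by blast
      obtain \<mu> where mu: "\<mu> \<in> M" "\<forall>v. lookup \<mu> v \<le> lookup c v + (if v \<in> s then Nf s else 0)"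
        using Nf[OF sG] by blast
      have "le_pm \<mu> x" unfolding le_pm_def
      proof
        fix v
        show "lookup \<mu> v \<le> lookup x v"
        proof (cases "v \<in> s")
          case False
          then show ?thesis using mu(2)[rule_format, of v] xd(1) by (simp add: lookup_add)
        next
          case True
          have "card Ix = (\<Sum>j\<in>Ix. 1)" by simp
          also have "\<dots> \<le> (\<Sum>j\<in>Ix. lookup (\<phi> j) v)"
          proof (rule sum_mono)
            fix j assume "j \<in> Ix"
            then have "v \<in> keys (\<phi> j)" using True unfolding Ix_def by auto
            then show "1 \<le> lookup (\<phi> j) v" by (simp add: in_keys_iff)
          qed
          also have "\<dots> \<le> (\<Sum>j<K. lookup (\<phi> j) v)"
            by (rule sum_mono2) (auto simp: Ix_def)
          also have "\<dots> = lookup (\<Sum>j<K. \<phi> j) v" by (simp add: lookup_sum)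
          also have "\<dots> \<le> lookup d v" using phi(2) unfolding le_pm_def by blast
          finally have "card Ix \<le> lookup d v" .
          moreover have "N \<le> card Ix" using i(2) unfolding Ix_def s_def .
          moreover have "Nf s < N" using NfN[OF sG] .
          ultimately show ?thesis using mu(2)[rule_format, of v] True xd(1)
            by (simp add: lookup_add)
        qed
      qed
      then show "\<exists>\<mu>\<in>M. le_pm \<mu> x" using mu(1) by blast
    qed
  qed
  then show ?thesis unfolding ideal_saturation_def by blast
qed

theorem lemma6p1:
  fixes I J :: "('v::finite, 'a::field) mpoly set"
  assumes "monomial_ideal I"
    and "is_ideal J"
  shows "monomial_ideal (ideal_saturation I J)"
proof -
  obtain M where IM: "I = ideal_gen (monomial_poly ` M)"
    using assms(1) unfolding monomial_ideal_def by blast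
  define S where "S = ideal_saturation I J"
  have Sid: "is_ideal S" unfolding S_def IM by (rule sat_ideal[OF ideal_gen_ideal])
  define MS where "MS = {m. (monomial_poly m :: ('v, 'a) mpoly) \<in> S}"
  have "S = ideal_gen (monomial_poly ` MS)"
  proof
    show "ideal_gen (monomial_poly ` MS) \<subseteq> S"
      by (rule ideal_gen_least[OF Sid]) (auto simp: MS_def)
    show "S \<subseteq> ideal_gen (monomial_poly ` MS)"
    proof
      fix f assume "f \<in> S"
      then obtain k where fk: "f \<in> ideal_colon (ideal_gen (monomial_poly ` M)) (ideal_pow J k)"
        unfolding S_def ideal_saturation_def IM by blast
      show "f \<in> ideal_gen (monomial_poly ` MS)"
      proof (rule mem_from_keys[OF ideal_gen_ideal])
        fix c assume "c \<in> keys f"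
        then have "monomial_poly c \<in> S" unfolding S_def IM by (rule keylemma[OF fk])
        then have "c \<in> MS" unfolding MS_def by simp
        then show "monomial_poly c \<in> ideal_gen (monomial_poly ` MS)"
          using ideal_gen_sub by blast
      qed
    qed
  qed
  then show ?thesis unfolding monomial_ideal_def S_def by blast
qed

end
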